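(* Let $q$ be odd with $q\equiv1\pmod4$ fixed. Then, as $g\to\infty$, $$\sum_{\substack{P\text{ monic irreducible}\\ \deg P=2g+1}}\ \sum_{\substack{f\text{ monic},\ \deg f\le 2g\\ f=\square}}\frac{\chi_P(f)\,d(f)}{|f|^{1/2}}=\frac{1}{12}\,\frac{1}{\zeta_A(2)}\,\frac{|P|}{\log_q|P|}\,g(g+1)(2g+1)+O\!\left(\frac{|P|}{\log_q|P|}\,g^2\right),$$ where $|P|=q^{2g+1}$, $\log_q|P|=2g+1$, $\zeta_A(2)=\frac{1}{1-q^{-1}}$.
   Context: $A=\mathbb{F}_q[T]$; for nonzero $f\in A$, $|f|=q^{\deg f}$. "$f=\square$" means $f$ is the square of a monic polynomial. $d(f)$ is the number of pairs $(h_1,h_2)$ of monic polynomials with $h_1h_2=f$. For a monic irreducible $Q$ and $a\in A$, $\left(\frac{a}{Q}\right)$ is $0$ if $Q\mid a$, $1$ if $a$ is a nonzero square mod $Q$, $-1$ otherwise; extended to monic $f=\prod Q_i^{e_i}$ by $\left(\frac{a}{f}\right)=\prod\left(\frac{a}{Q_i}\right)^{e_i}$, $\left(\frac{a}{1}\right)=1$. For monic irreducible $P$, $\chi_P(f)=\left(\frac{P}{f}\right)$. Implied constants may depend on $q$. *)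

theory Defs
  imports "HOL-Computational_Algebra.Computational_Algebra" "HOL-Library.Landau_Symbols"
begin

text \<open>Polynomials over a finite field 'a play the role of A = F_q[T].\<close>

definition monic :: "'a::field_gcd poly \<Rightarrow> bool" where
  "monic p \<longleftrightarrow> lead_coeff p = 1"

definition leg_sym :: "'a::field_gcd poly \<Rightarrow> 'a poly \<Rightarrow> int" where
  "leg_sym a Q = (if Q dvd a then 0
                  else if (\<exists>b. Q dvd (b ^ 2 - a)) then 1 else -1)"

definition jac_sym :: "'a::field_gcd poly \<Rightarrow> 'a poly \<Rightarrow> int" where
  "jac_sym a f = (\<Prod>Q\<in>prime_factors f. leg_sym a Q ^ multiplicity Q f)"

definition chi :: "'a::field_gcd poly \<Rightarrow> 'a poly \<Rightarrow> int" where
  "chi P f = jac_sym P f"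

definition divisor_count :: "'a::field_gcd poly \<Rightarrow> nat" where
  "divisor_count f = card {(h1, h2). monic h1 \<and> monic h2 \<and> h1 * h2 = f}"

definition is_monic_square :: "'a::field_gcd poly \<Rightarrow> bool" where
  "is_monic_square f \<longleftrightarrow> (\<exists>h. monic h \<and> f = h ^ 2)"

definition pnorm :: "'a::{finite,field_gcd} poly \<Rightarrow> real" where
  "pnorm (f::'a poly) = real (card (UNIV :: 'a set)) ^ degree f"

end

theory Submission
  imports Defs
begin

lemma uf_field: "unit_factor (x::'a::field_gcd) = x"
  by (cases "x = 0") (auto intro!: is_unit_unit_factor simp: dvd_field_iff)
lemma uf_poly: "unit_factor (p::'a::field_gcd poly) = [:lead_coeff p:]"
  by (simp add: unit_factor_poly_def uf_field)
lemma monic_iff_normalize: "(p::'a::field_gcd poly) \<noteq> 0 \<Longrightarrow> monic p \<longleftrightarrow> normalize p = p"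
proof -
  assume p: "p \<noteq> 0"
  show ?thesis
  proof
    assume "monic p" thus "normalize p = p" unfolding monic_def
      by (metis normalize_mult_unit_factor mult.right_neutral uf_poly one_poly_eq_simps(1))
  next
    assume n: "normalize p = p"
    have "unit_factor (normalize p) = 1" using p by simp
    thus "monic p" unfolding monic_def using n uf_poly by (metis one_poly_eq_simps(1) pCons_eq_iff)
  qed
qed
lemma monic_normalize: "(p::'a::field_gcd poly) \<noteq> 0 \<Longrightarrow> monic (normalize p)"
  using monic_iff_normalize by (metis normalize_eq_0_iff normalize_idem)
lemma monic_ne0: "monic p \<Longrightarrow> p \<noteq> 0" unfolding monic_def by auto
lemma monic_mult: "monic p \<Longrightarrow> monic q \<Longrightarrow> monic (p*q)" unfolding monic_def by (simp add: lead_coeff_mult)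
lemma monic_power: "monic p \<Longrightarrow> monic (p^n)" unfolding monic_def by (simp add: lead_coeff_power)
lemma monic_factor: "monic (p*q) \<Longrightarrow> monic p \<Longrightarrow> monic (q::'a::field_gcd poly)" unfolding monic_def by (simp add: lead_coeff_mult)
lemma prime_factor_monic: "(P::'a::field_gcd poly) \<in> prime_factors x \<Longrightarrow> monic P"
  by (metis in_prime_factors_imp_prime monic_iff_normalize prime_def not_prime_0)
lemma gcd_monic: "(x::'a::field_gcd poly) \<noteq> 0 \<Longrightarrow> monic (gcd x y)"
  by (metis gcd_eq_0_iff monic_iff_normalize normalize_gcd)

definition Mon :: "nat \<Rightarrow> 'a::field_gcd poly set" where "Mon n = {p. monic p \<and> degree p = n}"

lemma finite_deg_le: "finite {p::'a::{finite,field_gcd} poly. degree p \<le> n}"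
proof -
  let ?S = "{p::'a poly. degree p \<le> n}"
  have inj: "inj_on (\<lambda>p. map (coeff p) [0..<Suc n]) ?S"
  proof (rule inj_onI)
    fix p q assume p: "p \<in> ?S" and q: "q \<in> ?S" and e: "map (coeff p) [0..<Suc n] = map (coeff q) [0..<Suc n]"
    show "p = q"
    proof (rule poly_eqI)
      fix i show "coeff p i = coeff q i"
      proof (cases "i \<le> n")
        case True
        have "map (coeff p) [0..<Suc n] ! i = map (coeff q) [0..<Suc n] ! i" by (simp only: e)
        moreover have "i < length [0..<Suc n]" using True by (simp del: upt_Suc)
        ultimately show ?thesis by (simp only: nth_map length_upt) (simp del: upt_Suc)
      next
        case False thus ?thesis using p q by (simp add: coeff_eq_0)
      qed
    qed
  qed
  have "(\<lambda>p. map (coeff p) [0..<Suc n]) ` ?S \<subseteq> {xs. set xs \<subseteq> UNIV \<and> length xs = Suc n}" by auto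
  moreover have "finite {xs. set xs \<subseteq> (UNIV::'a set) \<and> length xs = Suc n}"
    by (rule finite_lists_length_eq) simp
  ultimately have "finite ((\<lambda>p. map (coeff p) [0..<Suc n]) ` ?S)" by (rule finite_subset)
  thus ?thesis using inj by (rule finite_imageD)
qed

lemma finite_Mon: "finite (Mon n :: 'a::{finite,field_gcd} poly set)"
  by (rule finite_subset[OF _ finite_deg_le[of n]]) (auto simp: Mon_def)

lemma Mon_0: "Mon 0 = {1}"
proof -
  have "p = 1" if "monic p" "degree p = 0" for p :: "'a poly"
    using that unfolding monic_def by (metis degree_0_id one_pCons)
  thus ?thesis by (auto simp: Mon_def monic_def)
qed

lemma Mon_Suc: "Mon (Suc n) = (\<lambda>(a,r). pCons a r) ` (UNIV \<times> Mon n)"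
proof (intro equalityI subsetI)
  fix p assume "p \<in> Mon (Suc n)"
  hence p: "monic p" "degree p = Suc n" by (auto simp: Mon_def)
  obtain a r where pr: "p = pCons a r" by (cases p) auto
  have "r \<noteq> 0" using p pr by auto
  hence "monic r" "degree r = n" using p pr by (auto simp: monic_def)
  thus "p \<in> (\<lambda>(a,r). pCons a r) ` (UNIV \<times> Mon n)" using pr by (auto simp: Mon_def)
next
  fix p assume "p \<in> (\<lambda>(a,r). pCons a r) ` (UNIV \<times> Mon n)"
  then obtain a r where pr: "p = pCons a r" and r: "monic r" "degree r = n" by (auto simp: Mon_def)
  have "r \<noteq> 0" using r by (auto simp: monic_def)
  thus "p \<in> Mon (Suc n)" using pr r by (auto simp: Mon_def monic_def)
qed

lemma card_Mon: "card (Mon n :: 'a::{finite,field_gcd} poly set) = card (UNIV::'a set) ^ n"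
proof (induction n)
  case 0 show ?case by (simp add: Mon_0)
next
  case (Suc n)
  have "card (Mon (Suc n) :: 'a poly set) = card ((\<lambda>(a,r). pCons a r) ` (UNIV \<times> (Mon n :: 'a poly set)))"
    by (simp only: Mon_Suc)
  also have "\<dots> = card ((UNIV::'a set) \<times> (Mon n :: 'a poly set))" by (rule card_image) (auto simp: inj_on_def)
  also have "\<dots> = card (UNIV::'a set) * card (Mon n :: 'a poly set)" by (simp add: card_cartesian_product)
  finally show ?case using Suc by simp
qed



lemma Mon_dvd_eq:
  assumes h: "monic (h::'a::field_gcd poly)" "degree h \<le> n"
  shows "{f \<in> Mon n. h dvd f} = (\<lambda>m. h*m) ` Mon (n - degree h)"
proof (intro equalityI subsetI)
  fix f assume "f \<in> {f \<in> Mon n. h dvd f}"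
  then obtain k where f: "monic f" "degree f = n" "f = h*k" by (auto simp: Mon_def)
  have k0: "k \<noteq> 0" using f monic_ne0 by fastforce
  have h0: "h \<noteq> 0" using h monic_ne0 by auto
  have "monic k" using f h monic_factor by auto
  moreover have "degree f = degree h + degree k" using f(3) degree_mult_eq[OF h0 k0] by simp
  ultimately have "monic k" "degree k = n - degree h" using f(2) by auto
  thus "f \<in> (\<lambda>m. h*m) ` Mon (n - degree h)" using f by (auto simp: Mon_def)
next
  fix f assume "f \<in> (\<lambda>m. h*m) ` Mon (n - degree h)"
  then obtain m where m: "monic m" "degree m = n - degree h" "f = h*m" by (auto simp: Mon_def)
  thus "f \<in> {f \<in> Mon n. h dvd f}" using h monic_ne0[of h] monic_ne0[of m] monic_mult
    by (auto simp: Mon_def degree_mult_eq)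
qed

lemma card_Mon_dvd:
  assumes h: "monic (h::'a::{finite,field_gcd} poly)" "degree h \<le> n"
  shows "card {f \<in> Mon n. h dvd f} = card (UNIV::'a set) ^ (n - degree h)"
proof -
  have "inj_on (\<lambda>m. h*m) (Mon (n - degree h))" using monic_ne0[OF h(1)]
    by (auto simp: inj_on_def)
  thus ?thesis by (simp add: Mon_dvd_eq[OF h] card_image card_Mon)
qed

lemma irreducible_degree_pos: "irreducible (p::'a::field_gcd poly) \<Longrightarrow> degree p > 0"
proof (rule ccontr)
  assume p: "irreducible p" and "\<not> degree p > 0"
  hence "degree p = 0" by simp
  then obtain c where c: "p = [:c:]" using degree_0_id by metis
  have "p \<noteq> 0" using p by auto
  hence "is_unit p" using c by (simp add: is_unit_const_poly_iff dvd_field_iff)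
  thus False using p by (auto simp: irreducible_def)
qed

definition Dset :: "nat \<Rightarrow> ('a::field_gcd poly \<times> nat) set" where
  "Dset n = {(P,i). monic P \<and> irreducible P \<and> 1 \<le> i \<and> i * degree P \<le> n}"
definition Eset :: "nat \<Rightarrow> ('a::field_gcd poly \<times> nat) set" where
  "Eset n = {(P,i). monic P \<and> irreducible P \<and> 1 \<le> i \<and> i * degree P = n}"

lemma finite_Dset: "finite (Dset n :: ('a::{finite,field_gcd} poly \<times> nat) set)"
proof (rule finite_subset)
  show "Dset n \<subseteq> {P::'a poly. degree P \<le> n} \<times> {..n}"
  proof safe
    fix P :: "'a poly" and i assume "(P,i) \<in> Dset n"
    hence d: "degree P > 0" "1 \<le> i" "i * degree P \<le> n" using irreducible_degree_pos by (auto simp: Dset_def)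
    have "1 * degree P \<le> i * degree P" by (rule mult_le_mono1[OF d(2)])
    thus "degree P \<le> n" using d(3) by (metis order_trans mult_1)
    have "i * 1 \<le> i * degree P" using d(1) by (intro mult_le_mono2) simp
    thus "i \<le> n" using d(3) by (metis order_trans mult_1_right)
  qed
  show "finite ({P::'a poly. degree P \<le> n} \<times> {..n})" using finite_deg_le by auto
qed

lemma finite_Eset: "finite (Eset n :: ('a::{finite,field_gcd} poly \<times> nat) set)"
  by (rule finite_subset[OF _ finite_Dset[of n]]) (auto simp: Dset_def Eset_def)

lemma deg_decomp:
  assumes f: "monic (f::'a::{finite,field_gcd} poly)"
  shows "degree f = (\<Sum>x\<in>Dset (degree f). if fst x ^ snd x dvd f then degree (fst x) else 0)"
proof -
  have f0: "f \<noteq> 0" using f monic_ne0 by auto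
  have nf: "normalize f = f" using f f0 monic_iff_normalize by auto
  have "degree f = degree (\<Prod>P\<in>prime_factors f. P ^ multiplicity P f)"
    using prod_prime_factors[OF f0] nf by simp
  also have "\<dots> = (\<Sum>P\<in>prime_factors f. degree (P ^ multiplicity P f))"
    by (rule degree_prod_sum_eq) (auto dest: in_prime_factors_imp_prime)
  also have "\<dots> = (\<Sum>P\<in>prime_factors f. \<Sum>i\<in>{1..multiplicity P f}. degree P)"
  proof (intro sum.cong refl)
    fix P assume "P \<in> prime_factors f"
    hence "P \<noteq> 0" by (auto dest: in_prime_factors_imp_prime)
    thus "degree (P ^ multiplicity P f) = (\<Sum>i\<in>{1..multiplicity P f}. degree P)"
      by (simp add: degree_power_eq)
  qed
  also have "\<dots> = (\<Sum>x\<in>Sigma (prime_factors f) (\<lambda>P. {1..multiplicity P f}). degree (fst x))"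
    by (subst sum.Sigma) (auto simp: split_def)
  also have "Sigma (prime_factors f) (\<lambda>P. {1..multiplicity P f}) = {x \<in> Dset (degree f). fst x ^ snd x dvd f}"
  proof (intro equalityI subsetI)
    fix x assume "x \<in> Sigma (prime_factors f) (\<lambda>P. {1..multiplicity P f})"
    then obtain P i where x: "x = (P,i)" "P \<in> prime_factors f" "1 \<le> i" "i \<le> multiplicity P f" by auto
    have pr: "prime P" using x(2) by (auto dest: in_prime_factors_imp_prime)
    have dv: "P ^ i dvd f" using x(4) by (rule multiplicity_dvd')
    have "degree (P^i) \<le> degree f" using dv f0 by (rule dvd_imp_degree_le)
    moreover have "P \<noteq> 0" using pr by auto
    ultimately have "i * degree P \<le> degree f" by (simp add: degree_power_eq)
    moreover have "monic P" using x(2) by (rule prime_factor_monic)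
    moreover have "irreducible P" using pr by (simp add: prime_elem_imp_irreducible)
    ultimately show "x \<in> {x \<in> Dset (degree f). fst x ^ snd x dvd f}" using x dv by (auto simp: Dset_def)
  next
    fix x assume "x \<in> {x \<in> Dset (degree f). fst x ^ snd x dvd f}"
    then obtain P i where x: "x = (P,i)" "monic P" "irreducible P" "1 \<le> i" "P^i dvd f"
      by (auto simp: Dset_def)
    have P0: "P \<noteq> 0" using x(2) monic_ne0 by auto
    have "normalize P = P" using x(2) P0 monic_iff_normalize by blast
    hence pr: "prime P" using x(3) by (simp add: prime_def irreducible_imp_prime_elem)
    have "P dvd P^i" using x(4) by (simp add: dvd_power)
    hence "P dvd f" using x(5) dvd_trans by blast
    hence "P \<in> prime_factors f" using pr f0 by (simp add: in_prime_factors_iff)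
    moreover have "i \<le> multiplicity P f" using f0 x(5) pr by (intro multiplicity_geI) auto
    ultimately show "x \<in> Sigma (prime_factors f) (\<lambda>P. {1..multiplicity P f})" using x by auto
  qed
  also have "(\<Sum>x\<in>{x \<in> Dset (degree f). fst x ^ snd x dvd f}. degree (fst x)) = 
     (\<Sum>x\<in>Dset (degree f). if fst x ^ snd x dvd f then degree (fst x) else 0)"
    by (rule sum.inter_filter[OF finite_Dset])
  finally show ?thesis .
qed



lemma card_UNIV_ge2: "card (UNIV::'a::{finite,field_gcd} set) \<ge> 2"
proof -
  have "card {0::'a, 1} \<le> card (UNIV::'a set)" by (rule card_mono) auto
  thus ?thesis by simp
qed

lemma sum_if_const: "finite A \<Longrightarrow> (\<Sum>x\<in>A. if P x then c else 0) = (c::nat) * card {x\<in>A. P x}"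
  by (simp add: sum.inter_filter[symmetric])

lemma gauss_sum_nat:
  "n * card (UNIV::'a::{finite,field_gcd} set) ^ n =
   (\<Sum>x\<in>(Dset n :: ('a poly \<times> nat) set). degree (fst x) * card (UNIV::'a set) ^ (n - snd x * degree (fst x)))"
proof -
  let ?q = "card (UNIV::'a set)"
  have "n * ?q ^ n = (\<Sum>f\<in>(Mon n :: 'a poly set). degree f)"
    by (simp add: Mon_def card_Mon[unfolded Mon_def])
  also have "\<dots> = (\<Sum>f\<in>(Mon n :: 'a poly set). \<Sum>x\<in>Dset n. if fst x ^ snd x dvd f then degree (fst x) else 0)"
  proof (intro sum.cong refl)
    fix f :: "'a poly" assume "f \<in> Mon n"
    hence "monic f" "degree f = n" by (auto simp: Mon_def)
    thus "degree f = (\<Sum>x\<in>Dset n. if fst x ^ snd x dvd f then degree (fst x) else 0)"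
      using deg_decomp[of f] by simp
  qed
  also have "\<dots> = (\<Sum>x\<in>Dset n. \<Sum>f\<in>(Mon n :: 'a poly set). if fst x ^ snd x dvd f then degree (fst x) else 0)"
    by (rule sum.swap)
  also have "\<dots> = (\<Sum>x\<in>(Dset n :: ('a poly \<times> nat) set). degree (fst x) * ?q ^ (n - snd x * degree (fst x)))"
  proof (intro sum.cong refl)
    fix x :: "'a poly \<times> nat" assume "x \<in> Dset n"
    then obtain P i where x: "x = (P,i)" "monic P" "irreducible P" "i * degree P \<le> n" by (auto simp: Dset_def)
    have P0: "P \<noteq> 0" using x(2) monic_ne0 by auto
    have m: "monic (P^i)" "degree (P^i) \<le> n" using x P0 monic_power by (auto simp: degree_power_eq)
    have "(\<Sum>f\<in>(Mon n :: 'a poly set). if P ^ i dvd f then degree P else 0) = degree P * card {f\<in>Mon n. P^i dvd f}"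
      by (rule sum_if_const[OF finite_Mon])
    also have "\<dots> = degree P * ?q ^ (n - i * degree P)"
      using card_Mon_dvd[OF m] P0 by (simp add: degree_power_eq)
    finally show "(\<Sum>f\<in>(Mon n :: 'a poly set). if fst x ^ snd x dvd f then degree (fst x) else 0) =
       degree (fst x) * ?q ^ (n - snd x * degree (fst x))" by (simp only: x(1) fst_conv snd_conv)
  qed
  finally show ?thesis .
qed

lemma gauss_sum_real:
  "real n = (\<Sum>x\<in>(Dset n :: ('a::{finite,field_gcd} poly \<times> nat) set).
      real (degree (fst x)) / real (card (UNIV::'a set)) ^ (snd x * degree (fst x)))"
proof -
  let ?q = "real (card (UNIV::'a set))"
  have q0: "?q \<noteq> 0" using card_UNIV_ge2[where 'a='a] by auto
  have "real n * ?q ^ n = real (n * card (UNIV::'a set) ^ n)" by simp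
  also have "\<dots> = (\<Sum>x\<in>(Dset n :: ('a poly \<times> nat) set). real (degree (fst x)) * ?q ^ (n - snd x * degree (fst x)))"
    by (subst gauss_sum_nat) simp
  also have "\<dots> = (\<Sum>x\<in>(Dset n :: ('a poly \<times> nat) set). real (degree (fst x)) / ?q ^ (snd x * degree (fst x)) * ?q ^ n)"
  proof (intro sum.cong refl)
    fix x :: "'a poly \<times> nat" assume "x \<in> Dset n"
    hence le: "snd x * degree (fst x) \<le> n" by (auto simp: Dset_def)
    show "real (degree (fst x)) * ?q ^ (n - snd x * degree (fst x)) =
          real (degree (fst x)) / ?q ^ (snd x * degree (fst x)) * ?q ^ n"
      using q0 le by (simp add: power_diff)
  qed
  also have "\<dots> = (\<Sum>x\<in>(Dset n :: ('a poly \<times> nat) set). real (degree (fst x)) / ?q ^ (snd x * degree (fst x))) * ?q ^ n"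
    by (simp add: sum_distrib_right)
  finally show ?thesis using q0 by simp
qed

lemma Dset_le: "x \<in> Dset m \<Longrightarrow> snd x * degree (fst x) \<le> m" by (auto simp: Dset_def)
lemma Eset_eq: "x \<in> Eset m \<Longrightarrow> snd x * degree (fst x) = m" by (auto simp: Eset_def)

lemma gauss:
  assumes n: "n \<ge> 1"
  shows "(\<Sum>x\<in>(Eset n :: ('a::{finite,field_gcd} poly \<times> nat) set). degree (fst x)) = card (UNIV::'a set) ^ n"
proof -
  let ?q = "real (card (UNIV::'a set))"
  let ?f = "\<lambda>x::'a poly \<times> nat. real (degree (fst x)) / ?q ^ (snd x * degree (fst x))"
  have q0: "?q \<noteq> 0" using card_UNIV_ge2[where 'a='a] by auto
  have U: "(Dset n :: ('a poly \<times> nat) set) = Dset (n-1) \<union> Eset n" using n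
    by (auto simp: Dset_def Eset_def)
  have "real n = sum ?f (Dset n)" by (rule gauss_sum_real)
  also have "\<dots> = sum ?f (Dset (n-1)) + sum ?f (Eset n)"
  proof -
    have "Dset (n-1) \<inter> Eset n = ({} :: ('a poly \<times> nat) set)"
    proof (rule ccontr)
      assume "Dset (n-1) \<inter> Eset n \<noteq> ({} :: ('a poly \<times> nat) set)"
      then obtain x :: "'a poly \<times> nat" where x1: "x \<in> Dset (n-1)" and x2: "x \<in> Eset n" by blast
      from x1 have "snd x * degree (fst x) \<le> n - 1" by (rule Dset_le)
      moreover from x2 have "snd x * degree (fst x) = n" by (rule Eset_eq)
      ultimately show False using n by linarith
    qed
    thus ?thesis unfolding U by (rule sum.union_disjoint[OF finite_Dset finite_Eset])
  qed
  also have "sum ?f (Dset (n-1)) = real (n-1)" by (rule gauss_sum_real[symmetric])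
  also have "sum ?f (Eset n) = (\<Sum>x\<in>(Eset n :: ('a poly \<times> nat) set). real (degree (fst x)) / ?q ^ n)"
    by (intro sum.cong refl) (simp add: Eset_eq)
  also have "\<dots> = (\<Sum>x\<in>(Eset n :: ('a poly \<times> nat) set). real (degree (fst x))) / ?q ^ n"
    by (simp add: sum_divide_distrib)
  finally have "(\<Sum>x\<in>(Eset n :: ('a poly \<times> nat) set). real (degree (fst x))) = ?q ^ n"
    using n q0 by (simp add: field_simps)
  hence "real (\<Sum>x\<in>(Eset n :: ('a poly \<times> nat) set). degree (fst x)) = real (card (UNIV::'a set) ^ n)"
    by simp
  thus ?thesis by (simp only: of_nat_eq_iff)
qed



definition Irr :: "nat \<Rightarrow> 'a::field_gcd poly set" where
  "Irr n = {P. monic P \<and> irreducible P \<and> degree P = n}"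

lemma finite_Irr: "finite (Irr n :: 'a::{finite,field_gcd} poly set)"
  by (rule finite_subset[OF _ finite_Mon[of n]]) (auto simp: Irr_def Mon_def)

lemma card_MonLe: "card {P::'a::{finite,field_gcd} poly. monic P \<and> degree P \<le> m} \<le> (m+1) * card (UNIV::'a set) ^ m"
proof -
  let ?q = "card (UNIV::'a set)"
  have "{P::'a poly. monic P \<and> degree P \<le> m} = (\<Union>d\<in>{..m}. Mon d)" by (auto simp: Mon_def)
  hence "card {P::'a poly. monic P \<and> degree P \<le> m} \<le> (\<Sum>d\<le>m. card (Mon d :: 'a poly set))"
    by (simp add: card_UN_le)
  also have "\<dots> = (\<Sum>d\<le>m. ?q ^ d)" by (simp add: card_Mon)
  also have "\<dots> \<le> (\<Sum>d\<le>m. ?q ^ m)"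
    using card_UNIV_ge2[where 'a='a] by (intro sum_mono power_increasing) auto
  finally show ?thesis by simp
qed

lemma Eset_split:
  fixes N :: nat
  defines "B \<equiv> {x \<in> (Eset N :: ('a::{finite,field_gcd} poly \<times> nat) set). snd x \<ge> 2}"
  assumes N1: "N \<ge> 1"
  shows "card (UNIV::'a set) ^ N = (\<Sum>x\<in>(\<lambda>P. (P,1::nat)) ` (Irr N :: 'a poly set). degree (fst x)) + (\<Sum>x\<in>B. degree (fst x))"
    and "(\<Sum>x\<in>(\<lambda>P. (P,1::nat)) ` (Irr N :: 'a poly set). degree (fst x)) = N * card (Irr N :: 'a poly set)"
    and "(\<Sum>x\<in>B. degree (fst x)) \<le> N * ((N div 2 + 1) * card (UNIV::'a set) ^ (N div 2))"
proof -
  let ?A = "(\<lambda>P. (P,1::nat)) ` (Irr N :: 'a poly set)"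
  have U: "Eset N = ?A \<union> B" unfolding B_def by (auto simp: Eset_def Irr_def)
  have fB: "finite B" unfolding B_def using finite_Eset[of N] by auto
  have fA: "finite ?A" using finite_Irr by auto
  have "card (UNIV::'a set) ^ N = (\<Sum>x\<in>(Eset N :: ('a poly \<times> nat) set). degree (fst x))"
    using gauss[OF N1, where 'a='a] by simp
  also have "\<dots> = (\<Sum>x\<in>?A. degree (fst x)) + (\<Sum>x\<in>B. degree (fst x))"
    unfolding U by (rule sum.union_disjoint[OF fA fB]) (auto simp: B_def)
  finally show "card (UNIV::'a set) ^ N = (\<Sum>x\<in>?A. degree (fst x)) + (\<Sum>x\<in>B. degree (fst x))" .
  have "(\<Sum>x\<in>?A. degree (fst x)) = (\<Sum>P\<in>(Irr N :: 'a poly set). degree (fst (P, 1::nat)))"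
    by (subst sum.reindex) (auto simp: inj_on_def)
  also have "\<dots> = N * card (Irr N :: 'a poly set)" by (simp add: Irr_def)
  finally show "(\<Sum>x\<in>?A. degree (fst x)) = N * card (Irr N :: 'a poly set)" .
  have "(\<Sum>x\<in>B. degree (fst x)) \<le> (\<Sum>x\<in>B. N)"
  proof (rule sum_mono)
    fix x assume "x \<in> B"
    hence xE: "x \<in> Eset N" and "snd x \<ge> 2" unfolding B_def by auto
    hence e: "snd x * degree (fst x) = N" "snd x \<ge> 1" using Eset_eq[OF xE] by auto
    have "1 * degree (fst x) \<le> snd x * degree (fst x)" by (rule mult_le_mono1[OF e(2)])
    thus "degree (fst x) \<le> N" using e(1) by simp
  qed
  also have "\<dots> = card B * N" by simp
  also have "card B \<le> card {P::'a poly. monic P \<and> degree P \<le> N div 2}"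
  proof -
    have inj: "inj_on fst B"
    proof (rule inj_onI)
      fix x y assume "x \<in> B" "y \<in> B" "fst x = fst y"
      then obtain P i j where xy: "x = (P,i)" "y = (P,j)" "i * degree P = N" "j * degree P = N" "irreducible P"
        unfolding B_def Eset_def by auto
      have "degree P > 0" using xy(5) by (rule irreducible_degree_pos)
      hence "i = j" using xy(3,4) by (metis mult_right_cancel neq0_conv)
      thus "x = y" using xy by simp
    qed
    have "fst ` B \<subseteq> {P::'a poly. monic P \<and> degree P \<le> N div 2}"
    proof
      fix P assume "P \<in> fst ` B"
      then obtain x where x: "x \<in> B" "P = fst x" by auto
      hence xE: "x \<in> Eset N" "snd x \<ge> 2" by (auto simp: B_def)
      have m: "monic P" using xE(1) x(2) by (auto simp: Eset_def)
      have e: "snd x * degree P = N" using Eset_eq[OF xE(1)] x(2) by simp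
      have "2 * degree P \<le> snd x * degree P" using xE(2) by (rule mult_le_mono1)
      hence "degree P \<le> N div 2" using e by linarith
      thus "P \<in> {P. monic P \<and> degree P \<le> N div 2}" using m by auto
    qed
    hence "card (fst ` B) \<le> card {P::'a poly. monic P \<and> degree P \<le> N div 2}"
      by (rule card_mono[rotated]) (rule finite_subset[OF _ finite_deg_le[of "N div 2"]], auto)
    thus ?thesis using card_image[OF inj] by simp
  qed
  hence "card B * N \<le> (N div 2 + 1) * card (UNIV::'a set) ^ (N div 2) * N"
    using card_MonLe[where 'a='a, of "N div 2"] by (intro mult_le_mono1) simp
  finally show "(\<Sum>x\<in>B. degree (fst x)) \<le> N * ((N div 2 + 1) * card (UNIV::'a set) ^ (N div 2))"
    by (simp add: mult.commute)
qed

lemma pi_bounds: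
  assumes "N \<ge> 1"
  shows "N * card (Irr N :: 'a::{finite,field_gcd} poly set) \<le> card (UNIV::'a set) ^ N"
    and "card (UNIV::'a set) ^ N \<le> N * card (Irr N :: 'a poly set) + N * ((N div 2 + 1) * card (UNIV::'a set) ^ (N div 2))"
proof -
  note E = Eset_split[OF assms, where 'a='a]
  show "N * card (Irr N :: 'a::{finite,field_gcd} poly set) \<le> card (UNIV::'a set) ^ N" using E(1,2) by linarith
  show "card (UNIV::'a set) ^ N \<le> N * card (Irr N :: 'a poly set) + N * ((N div 2 + 1) * card (UNIV::'a set) ^ (N div 2))"
    using E by linarith
qed



lemma is_unit_degree0: "is_unit (k::'a::field_gcd poly) \<Longrightarrow> degree k = 0"
  by (metis dvd_imp_degree_le one_neq_zero degree_1 le_zero_eq)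

lemma chi_square_one:
  fixes P h :: "'a::field_gcd poly"
  assumes P: "irreducible P" "degree P = 2*g+1" and h: "monic h" "degree h \<le> g"
  shows "chi P (h^2) = 1"
proof -
  have h0: "h \<noteq> 0" using h monic_ne0 by auto
  have "leg_sym P Q ^ multiplicity Q (h^2) = 1" if Q: "Q \<in> prime_factors (h^2)" for Q
  proof -
    have pr: "prime Q" using Q by (auto dest: in_prime_factors_imp_prime)
    have "Q dvd h^2" using Q by (auto dest: in_prime_factors_imp_dvd)
    hence Qh: "Q dvd h" using pr by (simp add: prime_dvd_power_iff)
    have dQ: "degree Q \<le> g" using dvd_imp_degree_le[OF Qh h0] h(2) by simp
    have nd: "\<not> Q dvd P"
    proof
      assume "Q dvd P"
      then obtain k where k: "P = Q * k" by auto
      hence "is_unit Q \<or> is_unit k" using P(1) by (auto simp: irreducible_def)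
      moreover have "\<not> is_unit Q" using pr by auto
      ultimately have "degree k = 0" using is_unit_degree0 by blast
      moreover have "Q \<noteq> 0" "k \<noteq> 0" using k P(1) pr by auto
      ultimately have "degree P = degree Q" using k by (simp add: degree_mult_eq)
      thus False using dQ P(2) by simp
    qed
    have l: "leg_sym P Q = 1 \<or> leg_sym P Q = -1" using nd by (auto simp: leg_sym_def)
    have "multiplicity Q (h^2) = 2 * multiplicity Q h"
      using pr h0 by (simp add: prime_elem_multiplicity_power_distrib)
    thus ?thesis using l by (auto simp: power_mult)
  qed
  thus ?thesis unfolding chi_def jac_sym_def by simp
qed

lemma square_eq_monic:
  fixes h k :: "'a::field_gcd poly"
  assumes "monic h" "monic k" "h^2 = k^2"
  shows "h = k"
proof -
  have "h = k \<or> h = -k" using assms(3) by (simp add: power2_eq_iff)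
  moreover have "h = -k \<Longrightarrow> h = k"
  proof -
    assume hk: "h = -k"
    hence "(1::'a) = -1" using assms(1,2) by (simp add: monic_def)
    hence "smult (-1) k = smult 1 k" by metis
    thus "h = k" using hk by simp
  qed
  ultimately show ?thesis by blast
qed

lemma squares_image:
  "{f::'a::field_gcd poly. monic f \<and> degree f \<le> 2*g \<and> is_monic_square f} =
   (\<lambda>h. h^2) ` {h. monic h \<and> degree h \<le> g}"
proof (intro equalityI subsetI)
  fix f :: "'a poly" assume "f \<in> {f. monic f \<and> degree f \<le> 2*g \<and> is_monic_square f}"
  then obtain h where h: "monic h" "f = h^2" "degree f \<le> 2*g" by (auto simp: is_monic_square_def)
  have "degree f = 2 * degree h" using h(2) monic_ne0[OF h(1)] by (simp add: degree_power_eq)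
  thus "f \<in> (\<lambda>h. h^2) ` {h. monic h \<and> degree h \<le> g}" using h by auto
next
  fix f :: "'a poly" assume "f \<in> (\<lambda>h. h^2) ` {h. monic h \<and> degree h \<le> g}"
  then obtain h where h: "monic h" "f = h^2" "degree h \<le> g" by auto
  have "degree f = 2 * degree h" using h(2) monic_ne0[OF h(1)] by (simp add: degree_power_eq)
  thus "f \<in> {f. monic f \<and> degree f \<le> 2*g \<and> is_monic_square f}"
    using h monic_power by (auto simp: is_monic_square_def)
qed

lemma divisor_count_eq:
  fixes f :: "'a::field_gcd poly"
  assumes f: "monic f"
  shows "divisor_count f = card {a. monic a \<and> a dvd f}"
proof -
  let ?S = "{(h1, h2). monic h1 \<and> monic h2 \<and> h1 * h2 = f}"
  have inj: "inj_on fst ?S"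
  proof (rule inj_onI)
    fix x y assume "x \<in> ?S" "y \<in> ?S" "fst x = fst y"
    then obtain a b c where xy: "x = (a,b)" "y = (a,c)" "a*b = f" "a*c = f" "monic a" by auto
    hence "b = c" using monic_ne0[OF xy(5)] by (metis mult_left_cancel)
    thus "x = y" using xy by simp
  qed
  have im: "fst ` ?S = {a. monic a \<and> a dvd f}"
  proof (intro equalityI subsetI)
    fix a assume "a \<in> fst ` ?S" thus "a \<in> {a. monic a \<and> a dvd f}" by auto
  next
    fix a assume "a \<in> {a. monic a \<and> a dvd f}"
    then obtain b where b: "monic a" "f = a*b" by auto
    hence "monic b" using f monic_factor by auto
    thus "a \<in> fst ` ?S" using b by force
  qed
  show ?thesis unfolding divisor_count_def using card_image[OF inj] im by simp
qed

lemma finite_dvd_monic: "(f::'a::{finite,field_gcd} poly) \<noteq> 0 \<Longrightarrow> finite {a. monic a \<and> a dvd f}"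
  by (rule finite_subset[OF _ finite_deg_le[of "degree f"]]) (auto intro: dvd_imp_degree_le)

lemma pnorm_sq: "sqrt (pnorm (h^2 :: 'a::{finite,field_gcd} poly)) = real (card (UNIV::'a set)) ^ degree h"
proof (cases "h = 0")
  case True thus ?thesis by (simp add: pnorm_def)
next
  case False
  hence "degree (h^2) = 2 * degree h" by (simp add: degree_power_eq)
  hence "pnorm (h^2) = (real (card (UNIV::'a set)) ^ degree h)^2" by (simp add: pnorm_def power_mult mult.commute)
  thus ?thesis by simp
qed



lemma card_graded:
  fixes Y :: "nat \<Rightarrow> 'b set"
  assumes fin: "\<And>i. finite (Y i)"
  shows "card {(x::'a::{finite,field_gcd} poly, y). monic x \<and> degree x \<le> m \<and> y \<in> Y (degree x)} =
         (\<Sum>i\<le>m. card (UNIV::'a set) ^ i * card (Y i))"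
proof -
  have eq: "{(x::'a poly, y). monic x \<and> degree x \<le> m \<and> y \<in> Y (degree x)} = (\<Union>i\<in>{..m}. Mon i \<times> Y i)"
    by (auto simp: Mon_def)
  have "card (\<Union>i\<in>{..m}. (Mon i :: 'a poly set) \<times> Y i) = (\<Sum>i\<le>m. card ((Mon i :: 'a poly set) \<times> Y i))"
    apply (rule card_UN_disjoint)
      apply simp
     apply (simp add: fin finite_Mon)
    apply (auto simp: Mon_def)
    done
  also have "\<dots> = (\<Sum>i\<le>m. card (UNIV::'a set) ^ i * card (Y i))"
    by (simp add: card_cartesian_product card_Mon)
  finally show ?thesis unfolding eq .
qed

definition Tc :: "nat \<Rightarrow> ('a::field_gcd poly \<times> 'a poly \<times> 'a poly) set" where
  "Tc n = {(g,u,v). monic g \<and> monic u \<and> monic v \<and> coprime u v \<and> degree g + degree u + degree v = n}"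
definition Al :: "nat \<Rightarrow> ('a::field_gcd poly \<times> 'a poly \<times> 'a poly) set" where
  "Al n = {(g,u,v). monic g \<and> monic u \<and> monic v \<and> degree g + degree u + degree v = n}"
definition Qs :: "nat \<Rightarrow> ('a::field_gcd poly \<times> 'a poly) set" where
  "Qs n = {(h,a). monic h \<and> degree h = n \<and> monic a \<and> a dvd h^2}"

lemma finite_Al: "finite (Al n :: ('a::{finite,field_gcd} poly \<times> 'a poly \<times> 'a poly) set)"
proof (rule finite_subset)
  show "Al n \<subseteq> {p::'a poly. degree p \<le> n} \<times> {p::'a poly. degree p \<le> n} \<times> {p::'a poly. degree p \<le> n}"
    by (auto simp: Al_def)
  show "finite ({p::'a poly. degree p \<le> n} \<times> {p::'a poly. degree p \<le> n} \<times> {p::'a poly. degree p \<le> n})"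
    using finite_deg_le by auto
qed

lemma finite_Tc: "finite (Tc n :: ('a::{finite,field_gcd} poly \<times> 'a poly \<times> 'a poly) set)"
  by (rule finite_subset[OF _ finite_Al[of n]]) (auto simp: Al_def Tc_def)

lemma gcd_coprime_mult:
  fixes c u v :: "'a::field_gcd poly"
  assumes "monic c" "coprime u v"
  shows "gcd (c*u) (c*v) = c"
proof -
  have "gcd (c*u) (c*v) = normalize (c * gcd u v)" by (rule gcd_mult_left)
  also have "gcd u v = 1" using assms(2) by simp
  finally show ?thesis using assms(1) monic_iff_normalize monic_ne0 by auto
qed

lemma Tc_Qs_bij: "bij_betw (\<lambda>(g,u,v). (g*u*v, g*u^2)) (Tc n :: ('a::field_gcd poly \<times> 'a poly \<times> 'a poly) set) (Qs n)"
proof (rule bij_betwI[where g = "\<lambda>(h,a). (gcd a h div (a div gcd a h), a div gcd a h, h div gcd a h)"])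
  show "(\<lambda>(g,u,v). (g*u*v, g*u^2)) \<in> (Tc n :: ('a poly \<times> 'a poly \<times> 'a poly) set) \<rightarrow> Qs n"
  proof
    fix x :: "'a poly \<times> 'a poly \<times> 'a poly" assume "x \<in> Tc n"
    then obtain g u v where x: "x = (g,u,v)" "monic g" "monic u" "monic v" "degree g + degree u + degree v = n"
      by (auto simp: Tc_def)
    have nz: "g \<noteq> 0" "u \<noteq> 0" "v \<noteq> 0" using x monic_ne0 by auto
    have "monic (g*u*v)" "monic (g*u^2)"
      using monic_mult[OF monic_mult[OF x(2) x(3)] x(4)] monic_mult[OF x(2) monic_power[OF x(3)]] by auto
    moreover have "degree (g*u*v) = n" using nz x(5) by (simp add: degree_mult_eq)
    moreover have "g*u^2 dvd (g*u*v)^2" by (simp add: power2_eq_square algebra_simps)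
    ultimately show "(\<lambda>(g,u,v). (g*u*v, g*u^2)) x \<in> Qs n" using x by (simp add: Qs_def)
  qed
next
  show "(\<lambda>(h,a). (gcd a h div (a div gcd a h), a div gcd a h, h div gcd a h)) \<in> Qs n \<rightarrow> (Tc n :: ('a poly \<times> 'a poly \<times> 'a poly) set)"
  proof
    fix y :: "'a poly \<times> 'a poly" assume "y \<in> Qs n"
    then obtain h a where y: "y = (h,a)" "monic h" "degree h = n" "monic a" "a dvd h^2"
      by (auto simp: Qs_def)
    define w where "w = gcd a h"
    define u where "u = a div w"
    define v where "v = h div w"
    have h0: "h \<noteq> 0" using y monic_ne0 by auto
    have w0: "w \<noteq> 0" using h0 by (simp add: w_def)
    have mw: "monic w" using h0 gcd_monic[of h a] by (simp add: w_def gcd.commute)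
    have au: "a = w * u" by (simp add: u_def w_def)
    have hv: "h = w * v" by (simp add: v_def w_def)
    have cop: "coprime u v" unfolding u_def v_def w_def using h0 by (intro div_gcd_coprime) auto
    have mu: "monic u" using y(4) au mw monic_factor by metis
    have mv: "monic v" using y(2) hv mw monic_factor by metis
    have "w * u dvd w * (w * v^2)" using y(5) au hv by (simp add: power2_eq_square algebra_simps)
    hence "u dvd w * v^2" using w0 by simp
    moreover have "coprime u (v^2)" using cop by simp
    ultimately have "u dvd w" using coprime_dvd_mult_left_iff by blast
    then obtain g where wg: "w = u * g" by auto
    have mg: "monic g" using mw wg mu monic_factor by metis
    have u0: "u \<noteq> 0" "v \<noteq> 0" "g \<noteq> 0" using mu mv mg monic_ne0 by auto
    have gdef: "w div u = g" using wg u0 by simp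
    have "degree h = degree g + degree u + degree v" using hv wg u0 by (simp add: degree_mult_eq)
    hence "(g,u,v) \<in> Tc n" using mg mu mv cop y(3) by (simp add: Tc_def)
    thus "(\<lambda>(h,a). (gcd a h div (a div gcd a h), a div gcd a h, h div gcd a h)) y \<in> Tc n"
      using y(1) gdef by (simp add: w_def[symmetric] u_def[symmetric] v_def[symmetric])
  qed
next
  fix x :: "'a poly \<times> 'a poly \<times> 'a poly" assume "x \<in> Tc n"
  then obtain g u v where x: "x = (g,u,v)" "monic g" "monic u" "monic v" "coprime u v"
    by (auto simp: Tc_def)
  have nz: "g \<noteq> 0" "u \<noteq> 0" "v \<noteq> 0" using x monic_ne0 by auto
  have "gcd ((g*u)*u) ((g*u)*v) = g*u" using x by (intro gcd_coprime_mult monic_mult) auto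
  hence G: "gcd (g*u^2) (g*u*v) = g*u" by (simp add: power2_eq_square mult.assoc)
  have "g*u^2 div (g*u) = u" using nz by (simp add: power2_eq_square)
  moreover have "g*u*v div (g*u) = v" using nz by simp
  moreover have "g*u div u = g" using nz by simp
  ultimately show "(\<lambda>(h,a). (gcd a h div (a div gcd a h), a div gcd a h, h div gcd a h)) ((\<lambda>(g,u,v). (g*u*v, g*u^2)) x) = x"
    using x(1) G by simp
next
  fix y :: "'a poly \<times> 'a poly" assume "y \<in> Qs n"
  then obtain h a where y: "y = (h,a)" "monic h" "a dvd h^2"
    by (auto simp: Qs_def)
  define w where "w = gcd a h"
  define u where "u = a div w"
  define v where "v = h div w"
  have h0: "h \<noteq> 0" using y monic_ne0 by auto
  have w0: "w \<noteq> 0" using h0 by (simp add: w_def)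
  have au: "a = w * u" by (simp add: u_def w_def)
  have hv: "h = w * v" by (simp add: v_def w_def)
  have cop: "coprime u v" unfolding u_def v_def w_def using h0 by (intro div_gcd_coprime) auto
  have "w * u dvd w * (w * v^2)" using y(3) au hv by (simp add: power2_eq_square algebra_simps)
  hence "u dvd w * v^2" using w0 by simp
  moreover have "coprime u (v^2)" using cop by simp
  ultimately have "u dvd w" using coprime_dvd_mult_left_iff by blast
  then obtain g where wg: "w = u * g" by auto
  have u0: "u \<noteq> 0" using w0 wg by auto
  have gdef: "w div u = g" using wg u0 by simp
  have "g * u * v = h" "g * u^2 = a" using au hv wg by (simp_all add: power2_eq_square algebra_simps)
  thus "(\<lambda>(g,u,v). (g*u*v, g*u^2)) ((\<lambda>(h,a). (gcd a h div (a div gcd a h), a div gcd a h, h div gcd a h)) y) = y"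
    using y(1) gdef by (simp add: w_def[symmetric] u_def[symmetric] v_def[symmetric])
qed



lemma Al_SS_bij:
  "bij_betw (\<lambda>(w,(g,u,v)). (g, w*u, w*v))
     {(w,z). monic w \<and> degree w \<le> n div 2 \<and> z \<in> (Tc (n - 2*degree w) :: ('a::field_gcd poly \<times> 'a poly \<times> 'a poly) set)}
     (Al n)"
proof (rule bij_betwI[where g = "\<lambda>(g,x,y). (gcd x y, (g, x div gcd x y, y div gcd x y))"])
  show "(\<lambda>(w,(g,u,v)). (g, w*u, w*v)) \<in> {(w,z). monic w \<and> degree w \<le> n div 2 \<and> z \<in> (Tc (n - 2*degree w) :: ('a poly \<times> 'a poly \<times> 'a poly) set)} \<rightarrow> Al n"
  proof
    fix x :: "'a poly \<times> 'a poly \<times> 'a poly \<times> 'a poly"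
    assume "x \<in> {(w,z). monic w \<and> degree w \<le> n div 2 \<and> z \<in> (Tc (n - 2*degree w) :: ('a poly \<times> 'a poly \<times> 'a poly) set)}"
    then obtain w g u v where x: "x = (w,g,u,v)" "monic w" "degree w \<le> n div 2" "monic g" "monic u" "monic v"
      "degree g + degree u + degree v = n - 2 * degree w" by (auto simp: Tc_def)
    have nz: "w \<noteq> 0" "u \<noteq> 0" "v \<noteq> 0" using x monic_ne0 by auto
    have "degree g + degree (w*u) + degree (w*v) = n" using x(3,7) nz by (simp add: degree_mult_eq)
    thus "(\<lambda>(w,(g,u,v)). (g, w*u, w*v)) x \<in> Al n" using x monic_mult by (auto simp: Al_def)
  qed
next
  show "(\<lambda>(g,x,y). (gcd x y, (g, x div gcd x y, y div gcd x y))) \<in> Al n \<rightarrow>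
     {(w,z). monic w \<and> degree w \<le> n div 2 \<and> z \<in> (Tc (n - 2*degree w) :: ('a poly \<times> 'a poly \<times> 'a poly) set)}"
  proof
    fix y :: "'a poly \<times> 'a poly \<times> 'a poly" assume "y \<in> Al n"
    then obtain g a b where y: "y = (g,a,b)" "monic g" "monic a" "monic b" "degree g + degree a + degree b = n"
      by (auto simp: Al_def)
    define w where "w = gcd a b"
    define u where "u = a div w"
    define v where "v = b div w"
    have a0: "a \<noteq> 0" using y monic_ne0 by auto
    have mw: "monic w" using a0 gcd_monic by (simp add: w_def)
    have au: "a = w * u" by (simp add: u_def w_def)
    have bv: "b = w * v" by (simp add: v_def w_def)
    have cop: "coprime u v" unfolding u_def v_def w_def using a0 by (intro div_gcd_coprime) auto
    have mu: "monic u" using y(3) au mw monic_factor by metis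
    have mv: "monic v" using y(4) bv mw monic_factor by metis
    have nz: "w \<noteq> 0" "u \<noteq> 0" "v \<noteq> 0" using mw mu mv monic_ne0 by auto
    have "degree a = degree w + degree u" "degree b = degree w + degree v"
      using au bv nz by (simp_all add: degree_mult_eq)
    hence "degree w \<le> n div 2" "degree g + degree u + degree v = n - 2 * degree w" using y(5) by auto
    hence "(w, (g,u,v)) \<in> {(w,z). monic w \<and> degree w \<le> n div 2 \<and> z \<in> (Tc (n - 2*degree w) :: ('a poly \<times> 'a poly \<times> 'a poly) set)}"
      using mw y(2) mu mv cop by (simp add: Tc_def)
    thus "(\<lambda>(g,x,y). (gcd x y, (g, x div gcd x y, y div gcd x y))) y \<in>
     {(w,z). monic w \<and> degree w \<le> n div 2 \<and> z \<in> (Tc (n - 2*degree w) :: ('a poly \<times> 'a poly \<times> 'a poly) set)}"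
      using y(1) by (simp add: w_def[symmetric] u_def[symmetric] v_def[symmetric])
  qed
next
  fix x :: "'a poly \<times> 'a poly \<times> 'a poly \<times> 'a poly"
  assume "x \<in> {(w,z). monic w \<and> degree w \<le> n div 2 \<and> z \<in> (Tc (n - 2*degree w) :: ('a poly \<times> 'a poly \<times> 'a poly) set)}"
  then obtain w g u v where x: "x = (w,g,u,v)" "monic w" "coprime u v" by (auto simp: Tc_def)
  have G: "gcd (w*u) (w*v) = w" using x by (intro gcd_coprime_mult) auto
  have "w \<noteq> 0" using x monic_ne0 by auto
  thus "(\<lambda>(g,x,y). (gcd x y, (g, x div gcd x y, y div gcd x y))) ((\<lambda>(w,(g,u,v)). (g, w*u, w*v)) x) = x"
    using x(1) G by simp
next
  fix y :: "'a poly \<times> 'a poly \<times> 'a poly" assume "y \<in> Al n"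
  then obtain g a b where y: "y = (g,a,b)" by (auto simp: Al_def)
  show "(\<lambda>(w,(g,u,v)). (g, w*u, w*v)) ((\<lambda>(g,x,y). (gcd x y, (g, x div gcd x y, y div gcd x y))) y) = y"
    using y by simp
qed

lemma card_Al_rec:
  "card (Al n :: ('a::{finite,field_gcd} poly \<times> 'a poly \<times> 'a poly) set) =
   (\<Sum>i\<le>n div 2. card (UNIV::'a set) ^ i * card (Tc (n - 2*i) :: ('a poly \<times> 'a poly \<times> 'a poly) set))"
proof -
  have B: "bij_betw (\<lambda>(w,(g,u,v)). (g, w*u, w*v))
     {(w,z). monic w \<and> degree w \<le> n div 2 \<and> z \<in> (Tc (n - 2*degree w) :: ('a poly \<times> 'a poly \<times> 'a poly) set)}
     (Al n)" by (rule Al_SS_bij)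
  have "card (Al n :: ('a poly \<times> 'a poly \<times> 'a poly) set) =
    card {(w::'a poly,z). monic w \<and> degree w \<le> n div 2 \<and> z \<in> (Tc (n - 2*degree w) :: ('a poly \<times> 'a poly \<times> 'a poly) set)}"
    using bij_betw_same_card[OF B] by (rule sym)
  also have "\<dots> = (\<Sum>i\<le>n div 2. card (UNIV::'a set) ^ i * card (Tc (n - 2*i) :: ('a poly \<times> 'a poly \<times> 'a poly) set))"
    by (rule card_graded[where Y = "\<lambda>i. Tc (n - 2*i)"]) (rule finite_Tc)
  finally show ?thesis .
qed

lemma sum_lin: "2 * (\<Sum>i\<le>n. n - i + 1) = (n+1)*(n+2::nat)"
proof (induction n)
  case 0 thus ?case by simp
next
  case (Suc n)
  have "(\<Sum>i\<le>Suc n. Suc n - i + 1) = (\<Sum>i\<le>n. Suc n - i + 1) + 1" by simp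
  also have "(\<Sum>i\<le>n. Suc n - i + 1) = (\<Sum>i\<le>n. (n - i + 1) + 1)" by (intro sum.cong) auto
  also have "\<dots> = (\<Sum>i\<le>n. n - i + 1) + (\<Sum>i\<le>n. 1)" by (rule sum.distrib)
  also have "(\<Sum>i\<le>n. (1::nat)) = n + 1" by simp
  finally show ?case using Suc by simp
qed

lemma card_Al: "2 * card (Al n :: ('a::{finite,field_gcd} poly \<times> 'a poly \<times> 'a poly) set) = (n+1)*(n+2) * card (UNIV::'a set) ^ n"
proof -
  let ?q = "card (UNIV::'a set)"
  define Pr where "Pr = (\<lambda>m. {(x::'a poly, y). monic x \<and> degree x \<le> m \<and> y \<in> (Mon (m - degree x) :: 'a poly set)})"
  have cPr: "card (Pr m) = (m+1) * ?q ^ m" for m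
  proof -
    have "card (Pr m) = (\<Sum>i\<le>m. ?q ^ i * card (Mon (m - i) :: 'a poly set))"
      unfolding Pr_def by (rule card_graded[where Y = "\<lambda>i. Mon (m - i)"]) (rule finite_Mon)
    also have "\<dots> = (\<Sum>i\<le>m. ?q ^ m)"
      by (intro sum.cong refl) (simp add: card_Mon power_add[symmetric])
    finally show ?thesis by simp
  qed
  have fPr: "finite (Pr m)" for m
    by (rule finite_subset[of _ "{p::'a poly. degree p \<le> m} \<times> {p::'a poly. degree p \<le> m}"])
       (auto simp: Pr_def Mon_def intro: finite_deg_le)
  have "Al n = {(g,z). monic g \<and> degree g \<le> n \<and> z \<in> Pr (n - degree g)}"
    by (auto simp: Al_def Pr_def Mon_def)
  hence "card (Al n :: ('a poly \<times> 'a poly \<times> 'a poly) set) = (\<Sum>i\<le>n. ?q ^ i * card (Pr (n - i)))"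
    using card_graded[where Y = "\<lambda>i. Pr (n - i)", OF fPr, where 'a='a] by simp
  also have "\<dots> = (\<Sum>i\<le>n. (n - i + 1) * ?q ^ n)"
  proof (intro sum.cong refl)
    fix i assume "i \<in> {..n}"
    hence e: "?q^i * ?q^(n-i) = ?q^n" by (simp flip: power_add)
    have "?q^i * card (Pr (n-i)) = (n-i+1) * (?q^i * ?q^(n-i))" unfolding cPr by (simp only: mult.left_commute)
    thus "?q^i * card (Pr (n-i)) = (n-i+1) * ?q^n" unfolding e .
  qed
  also have "\<dots> = (\<Sum>i\<le>n. n - i + 1) * ?q ^ n" by (simp add: sum_distrib_right)
  finally have "2 * card (Al n :: ('a poly \<times> 'a poly \<times> 'a poly) set) = (2 * (\<Sum>i\<le>n. n - i + 1)) * ?q ^ n"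
    by (simp only: mult.assoc)
  thus ?thesis by (simp only: sum_lin)
qed



lemma card_Tc_formula:
  "real (card (Tc n :: ('a::{finite,field_gcd} poly \<times> 'a poly \<times> 'a poly) set)) =
   real (card (UNIV::'a set)) ^ n * (real ((n+1)*(n+2)) / 2 - real (n*(n-1)) / (2 * real (card (UNIV::'a set))))"
proof -
  let ?q = "card (UNIV::'a set)"
  let ?t = "\<lambda>m. card (Tc m :: ('a poly \<times> 'a poly \<times> 'a poly) set)"
  let ?a = "\<lambda>m. card (Al m :: ('a poly \<times> 'a poly \<times> 'a poly) set)"
  have q0: "real ?q > 0" using card_UNIV_ge2[where 'a='a] by simp
  have aR: "real (?a m) = real ((m+1)*(m+2)) / 2 * real ?q ^ m" for m
  proof -
    have "real (2 * ?a m) = real ((m+1)*(m+2) * ?q ^ m)" using card_Al[of m, where 'a='a] by (simp only:)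
    hence "2 * real (?a m) = real ((m+1)*(m+2)) * real ?q ^ m" by (simp only: of_nat_mult of_nat_power)
    thus ?thesis by simp
  qed
  show ?thesis
  proof (cases "n < 2")
    case True
    hence "n div 2 = 0" by simp
    hence at: "?a n = ?t n" using card_Al_rec[of n, where 'a='a] by simp
    have "n = 0 \<or> n = 1" using True by auto
    thus ?thesis using at aR[of n] by auto
  next
    case False
    hence nd: "n div 2 = Suc ((n-2) div 2)" by presburger
    have "?a n = (\<Sum>i\<le>Suc ((n-2) div 2). ?q ^ i * ?t (n - 2*i))" using card_Al_rec[of n, where 'a='a] nd by simp
    also have "\<dots> = ?t n + (\<Sum>i\<le>(n-2) div 2. ?q ^ Suc i * ?t (n - 2 * Suc i))"
      by (subst sum.atMost_Suc_shift) simp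
    also have "(\<Sum>i\<le>(n-2) div 2. ?q ^ Suc i * ?t (n - 2 * Suc i)) = ?q * (\<Sum>i\<le>(n-2) div 2. ?q ^ i * ?t ((n-2) - 2 * i))"
      by (simp add: sum_distrib_left mult.assoc)
    also have "(\<Sum>i\<le>(n-2) div 2. ?q ^ i * ?t ((n-2) - 2 * i)) = ?a (n-2)"
      using card_Al_rec[of "n-2", where 'a='a] by simp
    finally have rec: "real (?t n) = real (?a n) - real ?q * real (?a (n-2))" by simp
    have qn: "real ?q ^ n = real ?q * real ?q * real ?q ^ (n-2)"
      using False by (metis (no_types) power_add_numeral2 le_add_diff_inverse not_less power_add power2_eq_square mult.assoc)
    have e2: "real (n*(n-1)) = real ((n-2+1)*(n-2+2))"
    proof -
      have "n-2+1 = n-1" "n-2+2 = n" using False by auto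
      thus ?thesis by (simp only: mult.commute)
    qed
    show ?thesis unfolding rec aR e2 using q0 qn by (simp add: field_simps)
  qed
qed



definition Tn :: "real \<Rightarrow> nat \<Rightarrow> real" where
  "Tn q n = real ((n+1)*(n+2)) / 2 - real (n*(n-1)) / (2 * q)"

lemma sum_Mon_card:
  "(\<Sum>h\<in>(Mon n :: 'a::{finite,field_gcd} poly set). card {a. monic a \<and> a dvd h^2}) =
   card (Tc n :: ('a poly \<times> 'a poly \<times> 'a poly) set)"
proof -
  have "Qs n = Sigma (Mon n :: 'a poly set) (\<lambda>h. {a. monic a \<and> a dvd h^2})"
    by (auto simp: Qs_def Mon_def)
  moreover have "\<forall>h\<in>(Mon n :: 'a poly set). finite {a. monic a \<and> a dvd h^2}"
    using finite_dvd_monic monic_ne0 monic_power by (auto simp: Mon_def)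
  ultimately have "card (Qs n :: ('a poly \<times> 'a poly) set) = (\<Sum>h\<in>(Mon n :: 'a poly set). card {a. monic a \<and> a dvd h^2})"
    using card_SigmaI[OF finite_Mon] by simp
  moreover have "card (Tc n :: ('a poly \<times> 'a poly \<times> 'a poly) set) = card (Qs n :: ('a poly \<times> 'a poly) set)"
    by (rule bij_betw_same_card[OF Tc_Qs_bij])
  ultimately show ?thesis by simp
qed

lemma inner_sum:
  fixes P :: "'a::{finite,field_gcd} poly"
  assumes P: "irreducible P" "degree P = 2*g+1"
  shows "(\<Sum>f\<in>{f::'a poly. monic f \<and> degree f \<le> 2*g \<and> is_monic_square f}.
           real_of_int (chi P f) * real (divisor_count f) / sqrt (pnorm f)) =
         (\<Sum>n\<le>g. Tn (real (card (UNIV::'a set))) n)"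
proof -
  let ?q = "real (card (UNIV::'a set))"
  let ?F = "\<lambda>f::'a poly. real_of_int (chi P f) * real (divisor_count f) / sqrt (pnorm f)"
  have inj: "inj_on (\<lambda>h::'a poly. h^2) {h. monic h \<and> degree h \<le> g}"
    by (auto simp: inj_on_def intro: square_eq_monic)
  have "(\<Sum>f\<in>{f::'a poly. monic f \<and> degree f \<le> 2*g \<and> is_monic_square f}. ?F f) =
        (\<Sum>h\<in>{h::'a poly. monic h \<and> degree h \<le> g}. ?F (h^2))"
    unfolding squares_image by (subst sum.reindex[OF inj]) simp
  also have "\<dots> = (\<Sum>h\<in>{h::'a poly. monic h \<and> degree h \<le> g}. real (card {a. monic a \<and> a dvd h^2}) / ?q ^ degree h)"
  proof (intro sum.cong refl)
    fix h :: "'a poly" assume "h \<in> {h. monic h \<and> degree h \<le> g}"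
    hence h: "monic h" "degree h \<le> g" by auto
    show "?F (h^2) = real (card {a. monic a \<and> a dvd h^2}) / ?q ^ degree h"
      using chi_square_one[OF P h] divisor_count_eq[OF monic_power[OF h(1)]] pnorm_sq[of h] by simp
  qed
  also have "{h::'a poly. monic h \<and> degree h \<le> g} = (\<Union>n\<in>{..g}. Mon n)" by (auto simp: Mon_def)
  also have "(\<Sum>h\<in>(\<Union>n\<in>{..g}. (Mon n :: 'a poly set)). real (card {a. monic a \<and> a dvd h^2}) / ?q ^ degree h) =
      (\<Sum>n\<le>g. \<Sum>h\<in>(Mon n :: 'a poly set). real (card {a. monic a \<and> a dvd h^2}) / ?q ^ degree h)"
    apply (rule sum.UNION_disjoint)
      apply simp
     apply (simp add: finite_Mon)
    apply (auto simp: Mon_def)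
    done
  also have "\<dots> = (\<Sum>n\<le>g. Tn ?q n)"
  proof (intro sum.cong refl)
    fix n
    have "(\<Sum>h\<in>(Mon n :: 'a poly set). real (card {a. monic a \<and> a dvd h^2}) / ?q ^ degree h) =
          (\<Sum>h\<in>(Mon n :: 'a poly set). real (card {a. monic a \<and> a dvd h^2}) / ?q ^ n)"
      by (intro sum.cong refl) (simp add: Mon_def)
    also have "\<dots> = real (\<Sum>h\<in>(Mon n :: 'a poly set). card {a. monic a \<and> a dvd h^2}) / ?q ^ n"
      by (simp add: sum_divide_distrib)
    also have "\<dots> = real (card (Tc n :: ('a poly \<times> 'a poly \<times> 'a poly) set)) / ?q ^ n"
      by (simp only: sum_Mon_card)
    also have "\<dots> = Tn ?q n"
      using card_UNIV_ge2[where 'a='a] by (simp add: card_Tc_formula Tn_def)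
    finally show "(\<Sum>h\<in>(Mon n :: 'a poly set). real (card {a. monic a \<and> a dvd h^2}) / ?q ^ degree h) = Tn ?q n" .
  qed
  finally show ?thesis .
qed

definition Mg :: "real \<Rightarrow> nat \<Rightarrow> real" where
  "Mg q g = (1/12) * (1 - 1/q) * real g * real (g+1) * real (2*g+1)"

lemma S_bounds:
  assumes q: "q \<ge> 1"
  shows "Mg q g \<le> (\<Sum>n\<le>g. Tn q n) \<and> (\<Sum>n\<le>g. Tn q n) \<le> Mg q g + real (g+1)^2"
proof (induction g)
  case 0 thus ?case by (simp add: Mg_def Tn_def)
next
  case (Suc g)
  define m where "m = real (Suc g)"
  define X where "X = (1 - 1/q) * m^2 / 2"
  define B where "B = m / q"
  have inc: "Mg q (Suc g) = Mg q g + X"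
    using q unfolding X_def m_def by (simp add: Mg_def field_simps power2_eq_square)
  have tn: "Tn q (Suc g) = X + 3/2*m + 1 + B/2"
    using q unfolding X_def B_def m_def by (simp add: Tn_def field_simps power2_eq_square)
  have m1: "m \<ge> 1" unfolding m_def by simp
  have r: "0 \<le> B" "B \<le> m" using q unfolding B_def m_def by (auto simp: divide_le_eq)
  have sq: "real (Suc g + 1)^2 = real (g+1)^2 + 2*m + 1" unfolding m_def by (simp add: power2_eq_square field_simps)
  have "(\<Sum>n\<le>Suc g. Tn q n) = (\<Sum>n\<le>g. Tn q n) + Tn q (Suc g)" by simp
  thus ?case using Suc.IH[THEN conjunct1] Suc.IH[THEN conjunct2] inc tn r sq m1 by (intro conjI) linarith+
qed

lemma cube_le: "(n+1::nat)^3 \<le> 27 * 2^n"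
proof -
  let ?m = "n div 3"
  have "n + 1 \<le> 3 * (?m + 1)" by simp
  hence "(n+1)^3 \<le> (3 * (?m+1))^3" by (rule power_mono) simp
  also have "\<dots> = 27 * (?m+1)^3" by (subst power_mult_distrib) simp
  also have "(?m+1) \<le> 2^?m" by (induction ?m) (simp_all add: Suc_le_eq less_exp)
  hence "(?m+1)^3 \<le> (2^?m)^3" by (rule power_mono) simp
  also have "((2::nat)^?m)^3 = 2^(3*?m)" by (simp add: power_mult[symmetric] mult.commute)
  also have "(2::nat)^(3*?m) \<le> 2^n" by (rule power_increasing) auto
  finally show ?thesis by simp
qed



lemma final_bound:
  fixes Q p S M X :: real and g :: nat
  assumes g1: "g \<ge> 1" and Q: "Q \<ge> 2"
  and Xd: "X = Q^(2*g+1) / real (2*g+1)"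
  and p1: "p \<le> X" and p2: "X \<le> p + real (g+1) * Q^g"
  and S1: "M \<le> S" and S2: "S \<le> M + real (g+1)^2" and M0: "0 \<le> M" and M1: "M \<le> real (g+1)^3"
  and cube: "real (g+1)^3 \<le> 27 * Q^g"
  shows "\<bar>p*S - X*M\<bar> \<le> 436 * (X * real g^2)"
proof -
  define r where "r = real (g+1)"
  define G where "G = real g"
  define N where "N = real (2*g+1)"
  have r1: "r \<ge> 2" "r \<le> 2*G" "G \<ge> 1" using g1 by (auto simp: r_def G_def)
  have N1: "N > 0" "N \<le> 2*r" by (auto simp: N_def r_def)
  have Qg: "Q^g > 0" using Q by simp
  have X0: "X \<ge> 0" using Xd Q N1 by (simp add: N_def)
  have rr: "r^2 \<le> r^3" using r1 by (simp add: power2_eq_square power3_eq_cube)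
  have S0: "0 \<le> S" "S \<le> 2 * r^3" using S1 S2 M0 M1 rr unfolding r_def by auto
  have e1: "\<bar>p*S - X*M\<bar> \<le> (X - p)*S + X*(S - M)"
  proof -
    have A: "(X - p)*S \<ge> 0" using p1 S0 by simp
    have B: "X*(S - M) \<ge> 0" using X0 S1 by simp
    have "p*S - X*M = X*(S - M) - (X - p)*S" by (simp add: algebra_simps)
    thus ?thesis using A B by linarith
  qed
  have e2: "(X - p)*S \<le> (r * Q^g) * (2 * r^3)"
    by (rule mult_mono) (use p2 S0 r1 Qg in \<open>auto simp: r_def\<close>)
  have e3: "X*(S - M) \<le> X * (4 * G^2)"
  proof -
    have "S - M \<le> r^2" using S2 by (simp add: r_def)
    also have "r^2 \<le> (2*G)^2" using r1 by (intro power_mono) auto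
    finally show ?thesis using X0 by (intro mult_left_mono) (auto simp: power_mult_distrib)
  qed
  have e4: "(r * Q^g) * (2 * r^3) \<le> 432 * (X * G^2)"
  proof -
    have "2 * r^4 * N \<le> 2 * r^4 * (2*r)" using N1 r1 by (intro mult_left_mono) auto
    also have "\<dots> = 4 * r^2 * r^3" by (simp add: power_numeral_reduce)
    also have "\<dots> \<le> 4 * (2*G)^2 * (27 * Q^g)"
      using r1 cube unfolding r_def[symmetric]
      by (intro mult_mono power_mono) auto
    also have "\<dots> \<le> 432 * G^2 * Q^(g+1)"
    proof -
      have "Q^g \<le> Q^(g+1)" using Q by (intro power_increasing) auto
      thus ?thesis using r1 by (simp add: power_mult_distrib)
    qed
    finally have "2 * r^4 * N \<le> 432 * G^2 * Q^(g+1)" .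
    hence le: "Q^g * (2 * r^4 * N) \<le> Q^g * (432 * G^2 * Q^(g+1))" using Qg by (intro mult_left_mono) auto
    have eq: "Q^g * (432 * G^2 * Q^(g+1)) = 432 * G^2 * Q^(2*g+1)"
    proof -
      have "Q^g * Q^(g+1) = Q^(g + (g+1))" by (simp only: power_add)
      also have "g + (g+1) = 2*g+1" by simp
      finally have e: "Q^g * Q^(g+1) = Q^(2*g+1)" .
      have "Q^g * (432 * G^2 * Q^(g+1)) = 432 * G^2 * (Q^g * Q^(g+1))" by (simp only: mult_ac)
      thus ?thesis by (simp only: e)
    qed
    have "(2 * r^4 * Q^g) * N = Q^g * (2 * r^4 * N)" by (simp only: mult_ac)
    also note le
    also note eq
    finally have "(2 * r^4 * Q^g) * N \<le> (432 * G^2 * Q^(2*g+1))" .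
    hence "2 * r^4 * Q^g \<le> 432 * G^2 * Q^(2*g+1) / N" using N1 by (simp add: le_divide_eq)
    moreover have "X * G^2 = G^2 * Q^(2*g+1) / N" using Xd by (simp add: N_def)
    ultimately show ?thesis by (simp add: power_numeral_reduce algebra_simps)
  qed
  show ?thesis using e1 e2 e3 e4 unfolding G_def by linarith
qed

lemma Mg_bounds:
  assumes "Q \<ge> 1"
  shows "0 \<le> Mg Q g" "Mg Q g \<le> real (g+1)^3"
proof -
  have c: "0 \<le> 1 - 1/Q" "1 - 1/Q \<le> 1" using assms by (auto simp: field_simps)
  have A0: "0 \<le> real g * real (g+1) * real (2*g+1)" by simp
  have "g * (g+1) * (2*g+1) \<le> (g+1) * (g+1) * (2*(g+1))" by (intro mult_le_mono) auto
  hence A1: "real g * real (g+1) * real (2*g+1) \<le> 2 * real (g+1)^3"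
    by (simp only: of_nat_mult[symmetric] of_nat_le_iff) (simp add: power3_eq_cube algebra_simps)
  have "Mg Q g = (1/12) * ((1 - 1/Q) * (real g * real (g+1) * real (2*g+1)))" unfolding Mg_def by (simp only: mult.assoc)
  moreover have "(1 - 1/Q) * (real g * real (g+1) * real (2*g+1)) \<le> 1 * (2 * real (g+1)^3)"
    by (rule mult_mono) (use c A0 A1 in auto)
  moreover have "0 \<le> (1 - 1/Q) * (real g * real (g+1) * real (2*g+1))" using c A0 by simp
  ultimately show "0 \<le> Mg Q g" "Mg Q g \<le> real (g+1)^3" by auto
qed

theorem proposition4p5:
  fixes q :: nat
  assumes "card (UNIV :: ('a::{finite,field_gcd}) set) = q"
    and "odd q" and "q mod 4 = 1"
  shows "(\<lambda>g::nat.
      (\<Sum>P\<in>{P::'a poly. monic P \<and> irreducible P \<and> degree P = 2*g+1}.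
         \<Sum>f\<in>{f::'a poly. monic f \<and> degree f \<le> 2*g \<and> is_monic_square f}.
           real_of_int (chi P f) * real (divisor_count f) / sqrt (pnorm f))
      - (1/12) * (1 - 1 / real q) * (real q ^ (2*g+1) / real (2*g+1))
          * real g * real (g+1) * real (2*g+1))
    \<in> O(\<lambda>g. real q ^ (2*g+1) / real (2*g+1) * real g ^ 2)"
proof -
  note q = assms(1)
  let ?Q = "real q"
  have Q2: "?Q \<ge> 2" using card_UNIV_ge2[where 'a='a] q by simp
  let ?F = "\<lambda>g::nat.
      (\<Sum>P\<in>{P::'a poly. monic P \<and> irreducible P \<and> degree P = 2*g+1}.
         \<Sum>f\<in>{f::'a poly. monic f \<and> degree f \<le> 2*g \<and> is_monic_square f}.
           real_of_int (chi P f) * real (divisor_count f) / sqrt (pnorm f))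
      - (1/12) * (1 - 1 / real q) * (real q ^ (2*g+1) / real (2*g+1))
          * real g * real (g+1) * real (2*g+1)"
  have key: "\<bar>?F g\<bar> \<le> 436 * (real q ^ (2*g+1) / real (2*g+1) * real g ^ 2)" if g1: "g \<ge> 1" for g
  proof -
    define N where "N = 2*g+1"
    define X where "X = ?Q ^ N / real N"
    define S where "S = (\<Sum>n\<le>g. Tn ?Q n)"
    define p where "p = real (card (Irr N :: 'a poly set))"
    have Nd: "N div 2 = g" "N \<ge> 1" by (auto simp: N_def)
    have sum_eq: "(\<Sum>P\<in>{P::'a poly. monic P \<and> irreducible P \<and> degree P = 2*g+1}.
         \<Sum>f\<in>{f::'a poly. monic f \<and> degree f \<le> 2*g \<and> is_monic_square f}.
           real_of_int (chi P f) * real (divisor_count f) / sqrt (pnorm f)) = p * S"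
    proof -
      have "{P::'a poly. monic P \<and> irreducible P \<and> degree P = 2*g+1} = Irr N" by (simp add: Irr_def N_def)
      moreover have "(\<Sum>f\<in>{f::'a poly. monic f \<and> degree f \<le> 2*g \<and> is_monic_square f}.
           real_of_int (chi P f) * real (divisor_count f) / sqrt (pnorm f)) = S" if "P \<in> Irr N" for P
        using inner_sum[of P g] that q by (simp add: Irr_def N_def S_def)
      ultimately show ?thesis by (simp add: p_def)
    qed
    have F_eq: "?F g = p * S - X * Mg ?Q g"
      unfolding sum_eq X_def N_def Mg_def by (simp only: mult_ac)
    have pb1: "N * card (Irr N :: 'a poly set) \<le> q ^ N" using pi_bounds(1)[OF Nd(2), where 'a='a] q by simp
    have pb2: "q ^ N \<le> N * card (Irr N :: 'a poly set) + N * ((g + 1) * q ^ g)"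
      using pi_bounds(2)[OF Nd(2), where 'a='a] q Nd(1) by simp
    have N0: "real N > 0" using Nd by simp
    have p1: "p \<le> X"
    proof -
      have "real N * p \<le> ?Q ^ N" using pb1 unfolding p_def by (simp only: of_nat_mult[symmetric] of_nat_power[symmetric] of_nat_le_iff)
      thus ?thesis using N0 unfolding X_def by (simp add: le_divide_eq mult.commute)
    qed
    have p2: "X \<le> p + real (g+1) * ?Q^g"
    proof -
      have "?Q ^ N \<le> real N * p + real N * (real (g+1) * ?Q^g)" using pb2 unfolding p_def
        by (simp only: of_nat_mult[symmetric] of_nat_power[symmetric] of_nat_add[symmetric] of_nat_le_iff)
      hence "?Q ^ N \<le> real N * (p + real (g+1) * ?Q^g)" by (simp add: algebra_simps)
      thus ?thesis using N0 unfolding X_def by (simp add: divide_le_eq mult.commute)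
    qed
    have SB: "Mg ?Q g \<le> S" "S \<le> Mg ?Q g + real (g+1)^2" using S_bounds[of ?Q g] Q2 by (auto simp: S_def)
    have MB: "0 \<le> Mg ?Q g" "Mg ?Q g \<le> real (g+1)^3" using Mg_bounds[of ?Q g] Q2 by auto
    have cube: "real (g+1)^3 \<le> 27 * ?Q^g"
    proof -
      have "real ((g+1)^3) \<le> real (27 * 2^g)" using cube_le[of g] by (simp only: of_nat_le_iff)
      hence "real (g+1)^3 \<le> 27 * 2^g" by simp
      also have "(2::real)^g \<le> ?Q^g" using Q2 by (intro power_mono) auto
      finally show ?thesis by simp
    qed
    have "\<bar>p*S - X*Mg ?Q g\<bar> \<le> 436 * (X * real g^2)"
      by (rule final_bound[OF g1 Q2 _ p1 p2 SB MB cube]) (simp add: X_def N_def)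
    thus ?thesis unfolding F_eq by (simp add: X_def N_def)
  qed
  show ?thesis
  proof (rule bigoI[where c = 436])
    show "eventually (\<lambda>g. norm (?F g) \<le> 436 * norm (real q ^ (2*g+1) / real (2*g+1) * real g ^ 2)) at_top"
      using eventually_ge_at_top[of "1::nat"]
    proof (rule eventually_mono)
      fix g :: nat assume "g \<ge> 1"
      thus "norm (?F g) \<le> 436 * norm (real q ^ (2*g+1) / real (2*g+1) * real g ^ 2)"
        using key[of g] by simp
    qed
  qed
qed


end
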